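(* Let $1 \le q \le w$ be integers and let $Q$ be a subset of $[w]$ of size $q$. Let $Y$ and $Z$ be two finite totally ordered sets and let $A_1,\ldots, A_r$ be $q$-element subsets of $Y$. If $|Z| \ge |Y| + r(w-q)$, then there exist an injection $\pi\colon Y \to Z$ and $r$ subsets $W_1,\ldots, W_r$ of $Z$, each of size $w$, such that for every $i \in [r]$, $Q$ selects $\pi(A_i)$ in $W_i$. Moreover, one can further require that $W_i \cap W_j = \pi(A_i \cap A_j)$ for any $i\neq j\in[r]$.
   Context: $[w]=\{1,\dots,w\}$. If $e_1<e_2<\dots<e_w$ are the elements of a totally ordered set $W$ and $Q\subseteq[w]$, the subset selected by $Q$ in $W$ is $\{e_i : i\in Q\}$. For a map $\pi$ and a set $A$, $\pi(A)=\{\pi(a):a\in A\}$. *)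

theory Defs
  imports Main
begin

definition selected :: "nat set \<Rightarrow> 'a::linorder set \<Rightarrow> 'a set" where
  "selected Q W = {sorted_list_of_set W ! (i - 1) | i. i \<in> Q \<and> 1 \<le> i \<and> i \<le> card W}"

end

theory Submission
  imports Defs "HOL-Library.Product_Lexorder"
begin

definition rk :: "'a::linorder set \<Rightarrow> 'a \<Rightarrow> nat" where
  "rk X x = card {z\<in>X. z < x}"

lemma rk_mono:
  assumes "finite X" "x \<in> X" "y \<in> X" "x < y"
  shows "rk X x < rk X y"
proof -
  have "{z\<in>X. z < x} \<subset> {z\<in>X. z < y}" using assms by auto
  then show ?thesis unfolding rk_def using assms(1) by (simp add: psubset_card_mono)
qed

lemma rk_smono: "finite X \<Longrightarrow> strict_mono_on X (rk X)"
  by (rule strict_mono_onI) (rule rk_mono)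

lemma rk_less:
  assumes "finite X" "x \<in> X"
  shows "rk X x < card X"
proof -
  have "{z\<in>X. z < x} \<subset> X" using assms by auto
  then show ?thesis unfolding rk_def using assms(1) by (simp add: psubset_card_mono)
qed

lemma rk_bij:
  assumes "finite X"
  shows "bij_betw (rk X) X {..<card X}"
proof -
  have inj: "inj_on (rk X) X" using strict_mono_on_imp_inj_on[OF rk_smono[OF assms]] .
  have sub: "rk X ` X \<subseteq> {..<card X}" using rk_less[OF assms] by auto
  have "card (rk X ` X) = card {..<card X}" using card_image[OF inj] by simp
  then have "rk X ` X = {..<card X}" using sub by (simp add: card_subset_eq)
  then show ?thesis using inj by (simp add: bij_betw_def)
qed

lemma rk_inv:
  assumes "finite X" "k < card X"
  shows "inv_into X (rk X) k \<in> X" "rk X (inv_into X (rk X) k) = k"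
proof -
  have b: "bij_betw (rk X) X {..<card X}" using rk_bij[OF assms(1)] .
  have "k \<in> rk X ` X" using b assms(2) by (simp add: bij_betw_def)
  then show "inv_into X (rk X) k \<in> X" "rk X (inv_into X (rk X) k) = k"
    by (auto simp: inv_into_into f_inv_into_f)
qed

lemma rk_inv_smono:
  assumes "finite X"
  shows "strict_mono_on {..<card X} (inv_into X (rk X))"
proof (rule strict_mono_onI)
  fix k l assume kl: "k \<in> {..<card X}" "l \<in> {..<card X}" "k < l"
  let ?g = "inv_into X (rk X)"
  have g: "?g k \<in> X" "rk X (?g k) = k" "?g l \<in> X" "rk X (?g l) = l"
    using rk_inv[OF assms] kl by auto
  show "?g k < ?g l"
  proof (rule ccontr)
    assume "\<not> ?g k < ?g l"
    then have "?g l < ?g k \<or> ?g l = ?g k" by auto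
    then show False
    proof
      assume "?g l < ?g k" then have "rk X (?g l) < rk X (?g k)" using rk_mono[OF assms, of "?g l" "?g k"] g by simp
      then show False using g kl by auto
    next
      assume eq: "?g l = ?g k"
      have "l = rk X (?g l)" using g by simp
      also have "\<dots> = k" using eq g by simp
      finally show False using kl by simp
    qed
  qed
qed

lemma rk_image:
  assumes "finite X" "strict_mono_on X f" "x \<in> X"
  shows "rk (f ` X) (f x) = rk X x"
proof -
  have "{z\<in>f ` X. z < f x} = f ` {z\<in>X. z < x}"
    using assms(2,3) by (auto simp: strict_mono_on_less)
  moreover have "inj_on f {z\<in>X. z < x}"
    using strict_mono_on_imp_inj_on[OF assms(2)] by (rule inj_on_subset) auto
  ultimately show ?thesis unfolding rk_def by (simp add: card_image)
qed

lemma nth_rk: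
  assumes "finite X" "k < card X"
  shows "rk X (sorted_list_of_set X ! k) = k"
proof -
  let ?s = "sorted_list_of_set X"
  have ss: "sorted_wrt (<) ?s" by simp
  have len: "length ?s = card X" by simp
  have ds: "distinct ?s" by simp
  have "{z\<in>X. z < ?s ! k} = (\<lambda>j. ?s ! j) ` {..<k}"
  proof
    show "{z\<in>X. z < ?s ! k} \<subseteq> (\<lambda>j. ?s ! j) ` {..<k}"
    proof
      fix z assume z: "z \<in> {z\<in>X. z < ?s ! k}"
      then have "z \<in> set ?s" using assms(1) by simp
      then obtain j where j: "j < length ?s" "z = ?s ! j" by (auto simp: in_set_conv_nth)
      have "j < k"
      proof (rule ccontr)
        assume "\<not> j < k"
        then have "k \<le> j" by simp
        then have "?s ! k \<le> ?s ! j"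
          using sorted_nth_mono[of ?s k j] j by simp
        then show False using z j by auto
      qed
      then show "z \<in> (\<lambda>j. ?s ! j) ` {..<k}" using j by auto
    qed
  next
    show "(\<lambda>j. ?s ! j) ` {..<k} \<subseteq> {z\<in>X. z < ?s ! k}"
    proof
      fix z assume "z \<in> (\<lambda>j. ?s ! j) ` {..<k}"
      then obtain j where j: "j < k" "z = ?s ! j" by auto
      have "z < ?s ! k" using sorted_wrt_nth_less[OF ss j(1)] j assms len by simp
      moreover have "z \<in> X" using j assms len
        by (metis nth_mem order.strict_trans set_sorted_list_of_set)
      ultimately show "z \<in> {z\<in>X. z < ?s ! k}" by simp
    qed
  qed
  moreover have "inj_on (\<lambda>j. ?s ! j) {..<k}"
    using ds assms len by (auto simp: inj_on_def nth_eq_iff_index_eq)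
  ultimately show ?thesis unfolding rk_def by (simp add: card_image)
qed

lemma selected_rk:
  assumes "finite X"
  shows "selected Q X = {x\<in>X. Suc (rk X x) \<in> Q}"
proof
  let ?s = "sorted_list_of_set X"
  show "selected Q X \<subseteq> {x\<in>X. Suc (rk X x) \<in> Q}"
  proof
    fix x assume "x \<in> selected Q X"
    then obtain i where i: "x = ?s ! (i - 1)" "i \<in> Q" "1 \<le> i" "i \<le> card X"
      unfolding selected_def by auto
    have "i - 1 < length ?s" using i by simp
    then have "x \<in> X" using i assms by (metis nth_mem set_sorted_list_of_set)
    moreover have "rk X x = i - 1" using nth_rk[OF assms, of "i - 1"] i by simp
    ultimately show "x \<in> {x\<in>X. Suc (rk X x) \<in> Q}" using i by simp
  qed
next
  let ?s = "sorted_list_of_set X"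
  show "{x\<in>X. Suc (rk X x) \<in> Q} \<subseteq> selected Q X"
  proof
    fix x assume x: "x \<in> {x\<in>X. Suc (rk X x) \<in> Q}"
    then have "x \<in> set ?s" using assms by simp
    then obtain j where j: "j < card X" "x = ?s ! j" by (auto simp: in_set_conv_nth)
    have "rk X x = j" using nth_rk[OF assms j(1)] j by simp
    then show "x \<in> selected Q X" unfolding selected_def using x j
      by (intro CollectI exI[of _ "Suc j"]) auto
  qed
qed

lemma selected_image:
  assumes "finite X" "strict_mono_on X f"
  shows "selected Q (f ` X) = f ` selected Q X"
  using assms by (auto simp: selected_rk rk_image)

lemma selected_interval:
  assumes "Q \<subseteq> {1..(w::nat)}"
  shows "selected Q {1..w} = Q"
proof -
  have "\<And>x. x \<in> {1..w} \<Longrightarrow> rk {1..w} x = x - 1"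
  proof -
    fix x assume "x \<in> {1..w}"
    then have "{z\<in>{1..w}. z < x} = {1..<x}" by auto
    then show "rk {1..w} x = x - 1" unfolding rk_def by simp
  qed
  then show ?thesis using assms by (auto simp: selected_rk)
qed


lemma smono_comp:
  assumes "strict_mono_on A f" "f ` A \<subseteq> B" "strict_mono_on B g"
  shows "strict_mono_on A (g \<circ> f)"
proof (rule strict_mono_onI)
  fix r s assume "r \<in> A" "s \<in> A" "r < s"
  then have "f r < f s" "f r \<in> B" "f s \<in> B" using assms(1,2) strict_mono_onD[OF assms(1)] by auto
  then show "(g \<circ> f) r < (g \<circ> f) s" using strict_mono_onD[OF assms(3)] by simp
qed

theorem lemma29:
  fixes q w r :: nat and Q :: "nat set"
    and Y :: "'a::linorder set" and Z :: "'b::linorder set"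
    and A :: "nat \<Rightarrow> 'a set"
  assumes "1 \<le> q" and "q \<le> w"
    and "Q \<subseteq> {1..w}" and "card Q = q"
    and "finite Y" and "finite Z"
    and "\<forall>i\<in>{1..r}. A i \<subseteq> Y \<and> card (A i) = q"
    and "card Z \<ge> card Y + r * (w - q)"
  shows "\<exists>\<pi> W. inj_on \<pi> Y \<and> \<pi> ` Y \<subseteq> Z
           \<and> (\<forall>i\<in>{1..r}. W i \<subseteq> Z \<and> card (W i) = w
                \<and> selected Q (W i) = \<pi> ` (A i))
           \<and> (\<forall>i\<in>{1..r}. \<forall>j\<in>{1..r}. i \<noteq> j \<longrightarrow> W i \<inter> W j = \<pi> ` (A i \<inter> A j))"
proof -
  define N where "N = card Y"
  define piT :: "'a \<Rightarrow> nat \<times> nat \<times> nat \<times> nat" where "piT y = (rk Y y, 1, 0, 0)" for y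
  define al where "al i p = inv_into (A i) (rk (A i)) (rk Q p)" for i p
  define nxt where "nxt p = (LEAST x. x \<in> Q \<and> p < x)" for p :: nat
  define key where "key i p = (if \<exists>x\<in>Q. p < x then rk Y (al i (nxt p)) else N)" for i p
  define sg where "sg i p = (if p \<in> Q then piT (al i p) else (key i p, 0, i, p))" for i p
  define WT where "WT i = sg i ` {1..w}" for i
  define E where "E i = sg i ` ({1..w} - Q)" for i
  define S where "S = piT ` Y \<union> (\<Union>i\<in>{1..r}. E i)"
  define h where "h t = inv_into Z (rk Z) (rk S t)" for t
  have fQ: "finite Q" using assms(3) finite_subset by blast
  have piT_mono: "strict_mono_on Y piT"
    by (rule strict_mono_onI) (simp add: piT_def rk_mono assms(5))
  have piT_inj: "inj_on piT Y" using strict_mono_on_imp_inj_on[OF piT_mono] .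
  have Ai: "A i \<subseteq> Y" "card (A i) = card Q" "finite (A i)" if "i \<in> {1..r}" for i
  proof -
    show "A i \<subseteq> Y" "card (A i) = card Q" using assms(4,7) that by auto
    then show "finite (A i)" using assms(5) finite_subset by blast
  qed
  have al_in: "al i p \<in> A i" if "i \<in> {1..r}" "p \<in> Q" for i p
    unfolding al_def using rk_inv(1)[OF Ai(3)[OF that(1)]] rk_less[OF fQ that(2)] Ai(2)[OF that(1)]
    by simp
  have al_mono: "strict_mono_on Q (al i)" if "i \<in> {1..r}" for i
  proof -
    have "strict_mono_on Q (inv_into (A i) (rk (A i)) \<circ> rk Q)"
      by (rule smono_comp[OF rk_smono[OF fQ]]) 
         (use rk_less[OF fQ] Ai(2)[OF that] rk_inv_smono[OF Ai(3)[OF that]] in auto)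
    then show ?thesis by (simp add: al_def[abs_def] comp_def)
  qed
  have al_img: "al i ` Q = A i" if "i \<in> {1..r}" for i
  proof -
    have "rk Q ` Q = {..<card (A i)}" using rk_bij[OF fQ] Ai(2)[OF that] by (simp add: bij_betw_def)
    moreover have "inv_into (A i) (rk (A i)) ` {..<card (A i)} = A i"
      using bij_betw_inv_into[OF rk_bij[OF Ai(3)[OF that]]] by (simp add: bij_betw_def)
    ultimately show ?thesis unfolding al_def by (simp add: image_image[symmetric])
  qed
  have nxt1: "nxt p \<in> Q \<and> p < nxt p" if "\<exists>x\<in>Q. p < x" for p
    unfolding nxt_def using that by (metis (mono_tags, lifting) LeastI)
  have nxt2: "nxt p \<le> x" if "x \<in> Q" "p < x" for p x
    unfolding nxt_def using that by (simp add: Least_le)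
  have rkY: "rk Y y < N" if "y \<in> Y" for y using rk_less[OF assms(5) that] N_def by simp
  have key_le: "key i p \<le> N" if i: "i \<in> {1..r}" for i p
  proof (cases "\<exists>x\<in>Q. p < x")
    case True
    then have "nxt p \<in> Q" using nxt1 by blast
    then have "al i (nxt p) \<in> Y" using al_in[OF i] Ai(1)[OF i] by blast
    then show ?thesis using rkY True by (simp add: key_def less_imp_le)
  qed (simp add: key_def)
  have sg_mono: "strict_mono_on {1..w} (sg i)" if i: "i \<in> {1..r}" for i
  proof (rule strict_mono_onI)
    fix p p' assume pp: "p \<in> {1..w}" "p' \<in> {1..w}" "p < p'"
    show "sg i p < sg i p'"
    proof (cases "p \<in> Q")
      case pQ: True
      show ?thesis
      proof (cases "p' \<in> Q")
        case True
        have "al i p < al i p'" using strict_mono_onD[OF al_mono[OF i] pQ True pp(3)] .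
        then have "piT (al i p) < piT (al i p')"
          using strict_mono_onD[OF piT_mono] al_in[OF i] Ai(1)[OF i] pQ True by blast
        then show ?thesis using pQ True by (simp add: sg_def)
      next
        case False
        have "rk Y (al i p) < key i p'"
        proof (cases "\<exists>x\<in>Q. p' < x")
          case True
          have n: "nxt p' \<in> Q" "p < nxt p'" using nxt1[OF True] pp by auto
          have "al i p < al i (nxt p')" using strict_mono_onD[OF al_mono[OF i] pQ n(1) n(2)] .
          then have "rk Y (al i p) < rk Y (al i (nxt p'))"
            using rk_mono[OF assms(5)] al_in[OF i] Ai(1)[OF i] pQ n(1) by blast
          then show ?thesis using True by (simp add: key_def)
        next
          case False
          then show ?thesis using rkY al_in[OF i pQ] Ai(1)[OF i] by (auto simp: key_def)
        qed
        then show ?thesis using pQ False by (simp add: sg_def piT_def)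
      qed
    next
      case pQ: False
      show ?thesis
      proof (cases "p' \<in> Q")
        case True
        have ex: "\<exists>x\<in>Q. p < x" using True pp by auto
        have n: "nxt p \<in> Q" "nxt p \<le> p'" using nxt1[OF ex] nxt2[OF True pp(3)] by auto
        have "rk Y (al i (nxt p)) \<le> rk Y (al i p')"
        proof (cases "nxt p = p'")
          case False
          then have "nxt p < p'" using n by simp
          then have "al i (nxt p) < al i p'" using strict_mono_onD[OF al_mono[OF i] n(1) True] by simp
          then show ?thesis
            using rk_mono[OF assms(5)] al_in[OF i] Ai(1)[OF i] n(1) True
            by (meson less_imp_le subsetD)
        qed simp
        then have "key i p \<le> rk Y (al i p')" using ex by (simp add: key_def)
        then show ?thesis using pQ True by (simp add: sg_def piT_def)
      next
        case False
        have "key i p \<le> key i p'"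
        proof (cases "\<exists>x\<in>Q. p' < x")
          case True
          have n': "nxt p' \<in> Q" "p' < nxt p'" using nxt1[OF True] by auto
          have ex: "\<exists>x\<in>Q. p < x" using n' pp by (meson order.strict_trans)
          have n: "nxt p \<in> Q" "nxt p \<le> nxt p'" using nxt1[OF ex] nxt2[OF n'(1)] n' pp by auto
          have "rk Y (al i (nxt p)) \<le> rk Y (al i (nxt p'))"
          proof (cases "nxt p = nxt p'")
            case False
            then have "nxt p < nxt p'" using n by simp
            then have "al i (nxt p) < al i (nxt p')"
              using strict_mono_onD[OF al_mono[OF i] n(1) n'(1)] by simp
            then show ?thesis
              using rk_mono[OF assms(5)] al_in[OF i] Ai(1)[OF i] n(1) n'(1)
              by (meson less_imp_le subsetD)
          qed simp
          then show ?thesis using True ex by (simp add: key_def)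
        next
          case False
          then show ?thesis using key_le[OF i] by (simp add: key_def)
        qed
        then show ?thesis using pQ False pp(3) by (simp add: sg_def)
      qed
    qed
  qed
  have WT_split: "WT i = piT ` A i \<union> E i" if i: "i \<in> {1..r}" for i
  proof -
    have "{1..w} = Q \<union> ({1..w} - Q)" using assms(3) by auto
    then have "WT i = sg i ` Q \<union> E i" unfolding WT_def E_def by (metis image_Un)
    moreover have "sg i ` Q = piT ` A i"
    proof -
      have "sg i ` Q = piT ` (al i ` Q)" by (auto simp: sg_def)
      then show ?thesis using al_img[OF i] by simp
    qed
    ultimately show ?thesis by simp
  qed
  have E_form: "fst (snd t) = 0 \<and> fst (snd (snd t)) = i" if "t \<in> E i" for t i
    using that by (auto simp: E_def sg_def)
  have piT_form: "fst (snd (piT y)) = 1" for y by (simp add: piT_def)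
  have WT_int: "WT i \<inter> WT j = piT ` (A i \<inter> A j)" if ij: "i \<in> {1..r}" "j \<in> {1..r}" "i \<noteq> j" for i j
  proof -
    have a: "piT ` (A i \<inter> A j) = piT ` A i \<inter> piT ` A j"
      using inj_on_image_Int[OF piT_inj Ai(1)[OF ij(1)] Ai(1)[OF ij(2)]] .
    have b: "t \<notin> E j" if "t \<in> E i" for t using E_form[OF that] E_form[of t j] ij(3) by auto
    have c: "t \<notin> piT ` Y" if "t \<in> E k" for t k
    proof
      assume "t \<in> piT ` Y"
      then obtain y where "t = piT y" by blast
      then show False using E_form[OF that] piT_form[of y] by simp
    qed
    have d: "piT ` A i \<subseteq> piT ` Y" "piT ` A j \<subseteq> piT ` Y" using Ai ij by auto
    show ?thesis
    proof
      show "WT i \<inter> WT j \<subseteq> piT ` (A i \<inter> A j)"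
      proof
        fix t assume t: "t \<in> WT i \<inter> WT j"
        have "t \<in> piT ` A i"
        proof (rule ccontr)
          assume "t \<notin> piT ` A i"
          then have ti: "t \<in> E i" using t WT_split[OF ij(1)] by blast
          have "t \<in> piT ` A j \<or> t \<in> E j" using t WT_split[OF ij(2)] by blast
          then show False using b[OF ti] c[OF ti] d(2) by blast
        qed
        moreover have "t \<in> piT ` A j"
        proof (rule ccontr)
          assume "t \<notin> piT ` A j"
          then have tj: "t \<in> E j" using t WT_split[OF ij(2)] by blast
          show False using c[OF tj] d(1) \<open>t \<in> piT ` A i\<close> by blast
        qed
        ultimately show "t \<in> piT ` (A i \<inter> A j)" using a by blast
      qed
      show "piT ` (A i \<inter> A j) \<subseteq> WT i \<inter> WT j" using a WT_split[OF ij(1)] WT_split[OF ij(2)] by blast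
    qed
  qed
  have WT_card: "card (WT i) = w" if i: "i \<in> {1..r}" for i
    unfolding WT_def using card_image[OF strict_mono_on_imp_inj_on[OF sg_mono[OF i]]] by simp
  have WT_sel: "selected Q (WT i) = piT ` A i" if i: "i \<in> {1..r}" for i
  proof -
    have "selected Q (WT i) = sg i ` Q"
      unfolding WT_def using selected_image[OF _ sg_mono[OF i], of Q] selected_interval[OF assms(3)]
      by simp
    also have "\<dots> = piT ` (al i ` Q)" by (auto simp: sg_def)
    finally show ?thesis using al_img[OF i] by simp
  qed
  have WT_S: "WT i \<subseteq> S" if i: "i \<in> {1..r}" for i
    using WT_split[OF i] Ai(1)[OF i] i unfolding S_def by blast
  have fS: "finite S" unfolding S_def E_def using assms(5) by auto
  have cardS: "card S \<le> card Z"
  proof -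
    have "card S \<le> card (piT ` Y) + card (\<Union>i\<in>{1..r}. E i)" unfolding S_def by (rule card_Un_le)
    also have "card (\<Union>i\<in>{1..r}. E i) \<le> (\<Sum>i\<in>{1..r}. card (E i))" by (rule card_UN_le) simp
    also have "(\<Sum>i\<in>{1..r}. card (E i)) \<le> (\<Sum>i\<in>{1..r}. w - q)"
    proof (rule sum_mono)
      fix i
      have "card (E i) \<le> card ({1..w} - Q)" unfolding E_def by (rule card_image_le) simp
      also have "\<dots> = w - q" using card_Diff_subset[OF fQ assms(3)] assms(4) by simp
      finally show "card (E i) \<le> w - q" .
    qed
    also have "(\<Sum>i\<in>{1..r}. w - q) = r * (w - q)" by simp
    also have "card (piT ` Y) \<le> card Y" by (rule card_image_le[OF assms(5)])
    finally show ?thesis using assms(8) by linarith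
  qed
  have h_mono: "strict_mono_on S h"
  proof -
    have sub: "rk S ` S \<subseteq> {..<card Z}"
    proof
      fix k assume "k \<in> rk S ` S"
      then obtain t where t: "t \<in> S" "k = rk S t" by blast
      then have "k < card S" using rk_less[OF fS] by simp
      then show "k \<in> {..<card Z}" using cardS by simp
    qed
    have "strict_mono_on S (inv_into Z (rk Z) \<circ> rk S)"
      by (rule smono_comp[OF rk_smono[OF fS] sub rk_inv_smono[OF assms(6)]])
    then show ?thesis by (simp add: h_def[abs_def] comp_def)
  qed
  have h_inj: "inj_on h S" using strict_mono_on_imp_inj_on[OF h_mono] .
  have h_Z: "h t \<in> Z" if "t \<in> S" for t
    unfolding h_def using rk_inv(1)[OF assms(6)] rk_less[OF fS that] cardS by simp
  have piT_S: "piT ` Y \<subseteq> S" unfolding S_def by blast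
  show ?thesis
  proof (intro exI[of _ "h \<circ> piT"] exI[of _ "\<lambda>i. h ` WT i"] conjI ballI impI)
    show "inj_on (h \<circ> piT) Y"
      using comp_inj_on[OF piT_inj inj_on_subset[OF h_inj piT_S]] .
    show "(h \<circ> piT) ` Y \<subseteq> Z"
    proof
      fix z assume "z \<in> (h \<circ> piT) ` Y"
      then obtain y where y: "y \<in> Y" "z = h (piT y)" by auto
      then have "piT y \<in> S" using piT_S by blast
      then show "z \<in> Z" using h_Z y(2) by blast
    qed
  next
    fix i assume i: "i \<in> {1..r}"
    show "h ` WT i \<subseteq> Z"
    proof
      fix z assume "z \<in> h ` WT i"
      then obtain t where t: "t \<in> WT i" "z = h t" by blast
      then have "t \<in> S" using WT_S[OF i] by blast
      then show "z \<in> Z" using h_Z t(2) by blast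
    qed
    show "card (h ` WT i) = w" using card_image[OF inj_on_subset[OF h_inj WT_S[OF i]]] WT_card[OF i]
      by simp
    have "selected Q (h ` WT i) = h ` selected Q (WT i)"
      using selected_image[OF _ monotone_on_subset[OF h_mono WT_S[OF i]]] WT_card[OF i]
      by (metis WT_def finite_atLeastAtMost finite_imageI)
    then show "selected Q (h ` WT i) = (h \<circ> piT) ` A i" using WT_sel[OF i] by (simp add: image_comp)
  next
    fix i j assume ij: "i \<in> {1..r}" "j \<in> {1..r}" "i \<noteq> j"
    have "h ` WT i \<inter> h ` WT j = h ` (WT i \<inter> WT j)"
      using inj_on_image_Int[OF h_inj WT_S[OF ij(1)] WT_S[OF ij(2)]] by simp
    then show "h ` WT i \<inter> h ` WT j = (h \<circ> piT) ` (A i \<inter> A j)"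
      using WT_int[OF ij] by (simp add: image_comp)
  qed
qed

end
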